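(* Let $G\in\mathcal{T}$ be uncontractible. Then every interior vertex of $G$ has degree at least $6$.
   Context: A torus graph with a single hole is a graph $G$ determined by a triple $(T,D,i)$ as follows. $M$ is a finite simplicial complex triangulating the torus $S^1\times S^1$ whose $1$-skeleton $T$ is a simple graph. $D$ is a simplicial complex triangulating a closed disc. $i:D\to M$ is a simplicial map which is injective on $2$-simplexes and respects adjacency of $2$-simplexes. $G$ is the subgraph of $T$ obtained by deleting the edges that are images under $i$ of interior $1$-simplexes of $D$. Its facial $3$-cycles are the $3$-cycles of $T$ bounding $2$-simplexes of $M$ that are not images of $2$-simplexes of $D$. The boundary graph $\partial G=i(\partial D)$ consists of the edges not lying in two facial $3$-cycles. For a finite simple graph $H=(V,E)$ the freedom number is $f(H)=3|V|-|E|$. $H$ is $(3,6)$-tight if $f(H)=6$ and $f(K)\ge 6$ for every subgraph $K$ with at least $3$ vertices. $\mathcal{T}$ denotes the class of $(3,6)$-tight torus graphs with a single hole. An edge is of type $FF$ if it lies in two facial $3$-cycles. $G$ is uncontractible if every $FF$ edge lies on a non-facial $3$-cycle. An interior vertex is a vertex of $G$ not lying on $\partial G$. *)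

theory Defs
  imports "HOL-Analysis.Analysis"
begin

definition simplicial_complex :: "'v set set \<Rightarrow> bool" where
  "simplicial_complex K \<longleftrightarrow>
     finite K \<and> (\<forall>s\<in>K. finite s \<and> s \<noteq> {}) \<and>
     (\<forall>s\<in>K. \<forall>t. t \<subseteq> s \<and> t \<noteq> {} \<longrightarrow> t \<in> K)"

text \<open>Standard geometric realisation: barycentric coordinate functions whose support is a
  simplex; topologised as a subspace of the product space 'v => real.\<close>

definition realization :: "'v set set \<Rightarrow> ('v \<Rightarrow> real) set" where
  "realization K = {f. (\<forall>v. 0 \<le> f v) \<and> sum f (\<Union>K) = 1 \<and> {v. f v \<noteq> 0} \<in> K}"

definition torus_triangulation :: "'v set set \<Rightarrow> bool" where
  "torus_triangulation M \<longleftrightarrow> simplicial_complex M \<and>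
     realization M homeomorphic (sphere (0::complex) 1 \<times> sphere (0::complex) 1)"

definition disc_triangulation :: "'w set set \<Rightarrow> bool" where
  "disc_triangulation D \<longleftrightarrow> simplicial_complex D \<and>
     realization D homeomorphic cball (0::complex) 1"

definition simplices_of_dim :: "'v set set \<Rightarrow> nat \<Rightarrow> 'v set set" where
  "simplices_of_dim K n = {s\<in>K. card s = Suc n}"

abbreviation edges_of :: "'v set set \<Rightarrow> 'v set set" where
  "edges_of K \<equiv> simplices_of_dim K 1"

abbreviation triangles_of :: "'v set set \<Rightarrow> 'v set set" where
  "triangles_of K \<equiv> simplices_of_dim K 2"

text \<open>In a triangulated disc an edge is interior iff it lies in two triangles, and lies on the
  boundary iff it lies in exactly one triangle.\<close>

definition interior_edges :: "'w set set \<Rightarrow> 'w set set" where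
  "interior_edges D = {e\<in>edges_of D. card {t\<in>triangles_of D. e \<subseteq> t} = 2}"

definition boundary_edges :: "'w set set \<Rightarrow> 'w set set" where
  "boundary_edges D = {e\<in>edges_of D. card {t\<in>triangles_of D. e \<subseteq> t} = 1}"

definition simplicial_map :: "('w \<Rightarrow> 'v) \<Rightarrow> 'w set set \<Rightarrow> 'v set set \<Rightarrow> bool" where
  "simplicial_map i D M \<longleftrightarrow> (\<forall>s\<in>D. i ` s \<in> M)"

definition torus_hole_data :: "'v set set \<Rightarrow> 'w set set \<Rightarrow> ('w \<Rightarrow> 'v) \<Rightarrow> bool" where
  "torus_hole_data M D i \<longleftrightarrow>
     torus_triangulation M \<and> disc_triangulation D \<and> simplicial_map i D M \<and>
     \<comment> \<open>injective on 2-simplexes\<close>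
     (\<forall>t\<in>triangles_of D. inj_on i t) \<and> inj_on (image i) (triangles_of D) \<and>
     \<comment> \<open>respects adjacency of 2-simplexes\<close>
     (\<forall>s\<in>triangles_of D. \<forall>t\<in>triangles_of D.
        card (s \<inter> t) = 2 \<longrightarrow> card (i ` s \<inter> i ` t) = 2)"

definition thg_vertices :: "'v set set \<Rightarrow> 'v set" where
  "thg_vertices M = \<Union>M"

definition thg_edges :: "'v set set \<Rightarrow> 'w set set \<Rightarrow> ('w \<Rightarrow> 'v) \<Rightarrow> 'v set set" where
  "thg_edges M D i = edges_of M - (image i) ` interior_edges D"

definition facial_cycles :: "'v set set \<Rightarrow> 'w set set \<Rightarrow> ('w \<Rightarrow> 'v) \<Rightarrow> 'v set set" where
  "facial_cycles M D i = triangles_of M - (image i) ` triangles_of D"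

definition thg_boundary_edges :: "'v set set \<Rightarrow> 'w set set \<Rightarrow> ('w \<Rightarrow> 'v) \<Rightarrow> 'v set set" where
  "thg_boundary_edges M D i = (image i) ` boundary_edges D"

definition interior_vertices :: "'v set set \<Rightarrow> 'w set set \<Rightarrow> ('w \<Rightarrow> 'v) \<Rightarrow> 'v set" where
  "interior_vertices M D i = thg_vertices M - \<Union>(thg_boundary_edges M D i)"

definition freedom :: "'v set \<Rightarrow> 'v set set \<Rightarrow> int" where
  "freedom V E = 3 * int (card V) - int (card E)"

definition is_subgraph :: "'v set \<Rightarrow> 'v set set \<Rightarrow> 'v set \<Rightarrow> 'v set set \<Rightarrow> bool" where
  "is_subgraph W F V E \<longleftrightarrow> W \<subseteq> V \<and> F \<subseteq> E \<and> (\<forall>e\<in>F. e \<subseteq> W)"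

definition tight36 :: "'v set \<Rightarrow> 'v set set \<Rightarrow> bool" where
  "tight36 V E \<longleftrightarrow> freedom V E = 6 \<and>
     (\<forall>W F. is_subgraph W F V E \<and> card W \<ge> 3 \<longrightarrow> freedom W F \<ge> 6)"

definition degree :: "'v set set \<Rightarrow> 'v \<Rightarrow> nat" where
  "degree E v = card {e\<in>E. v \<in> e}"

definition three_cycle :: "'v set set \<Rightarrow> 'v set \<Rightarrow> bool" where
  "three_cycle E c \<longleftrightarrow> card c = 3 \<and> (\<forall>e. e \<subseteq> c \<and> card e = 2 \<longrightarrow> e \<in> E)"

definition FF_edge :: "'v set set \<Rightarrow> 'w set set \<Rightarrow> ('w \<Rightarrow> 'v) \<Rightarrow> 'v set \<Rightarrow> bool" where
  "FF_edge M D i e \<longleftrightarrow> e \<in> thg_edges M D i \<and>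
     card {c\<in>facial_cycles M D i. e \<subseteq> c} = 2"

definition uncontractible :: "'v set set \<Rightarrow> 'w set set \<Rightarrow> ('w \<Rightarrow> 'v) \<Rightarrow> bool" where
  "uncontractible M D i \<longleftrightarrow>
     (\<forall>e. FF_edge M D i e \<longrightarrow>
        (\<exists>c. three_cycle (thg_edges M D i) c \<and> e \<subseteq> c \<and> c \<notin> facial_cycles M D i))"

definition in_class_T :: "'v set set \<Rightarrow> 'w set set \<Rightarrow> ('w \<Rightarrow> 'v) \<Rightarrow> bool" where
  "in_class_T M D i \<longleftrightarrow> torus_hole_data M D i \<and> tight36 (thg_vertices M) (thg_edges M D i)"

end

theory Submission
  imports Defs
begin


definition LE :: "('a::topological_space) set \<Rightarrow> bool" where
  "LE R \<longleftrightarrow> (\<forall>p\<in>R. \<exists>V W \<psi> \<psi>'. p \<in> V \<and> openin (top_of_set R) V \<and> open (W::complex set) \<and> homeomorphism V W \<psi> \<psi>')"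

definition IOD :: "('a::topological_space) set \<Rightarrow> bool" where
  "IOD R \<longleftrightarrow> (\<forall>U g. open (U::complex set) \<and> continuous_on U g \<and> inj_on g U \<and> g ` U \<subseteq> R \<longrightarrow> openin (top_of_set R) (g ` U))"

lemma LE_IOD: assumes "LE R" shows "IOD R"
  unfolding IOD_def
proof (intro allI impI)
  fix U :: "complex set" and g
  assume a: "open U \<and> continuous_on U g \<and> inj_on g U \<and> g ` U \<subseteq> R"
  hence oU: "open U" and cg: "continuous_on U g" and ig: "inj_on g U" and gR: "g ` U \<subseteq> R" by auto
  show "openin (top_of_set R) (g ` U)"
  proof (subst openin_subopen, intro ballI)
    fix y assume "y \<in> g ` U"
    then obtain u where u: "u \<in> U" "y = g u" by auto
    have "g u \<in> R" using u gR by auto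
    then obtain V and W :: "complex set" and \<psi> \<psi>' where ch: "g u \<in> V" "openin (top_of_set R) V" "open W" "homeomorphism V W \<psi> \<psi>'"
      using assms unfolding LE_def by meson
    have h1: "\<And>x. x \<in> V \<Longrightarrow> \<psi>' (\<psi> x) = x" using homeomorphism_apply1[OF ch(4)] .
    have h2: "\<psi> ` V = W" using homeomorphism_image1[OF ch(4)] .
    have h3: "continuous_on V \<psi>" using homeomorphism_cont1[OF ch(4)] .
    define U' where "U' = {x\<in>U. g x \<in> V}"
    obtain Op where O: "open Op" "V = R \<inter> Op" using ch(2) by (auto simp: openin_open)
    have "openin (top_of_set U) (U \<inter> g -` Op)" using continuous_openin_preimage_gen cg O(1) by blast
    moreover have "U \<inter> g -` Op = U'" using gR O unfolding U'_def by auto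
    ultimately have "openin (top_of_set U) U'" by simp
    hence oU': "open U'" using oU openin_open_trans by blast
    have gU'V: "g ` U' \<subseteq> V" unfolding U'_def by auto
    have U'U: "U' \<subseteq> U" unfolding U'_def by auto
    have c1: "continuous_on U' (\<psi> \<circ> g)"
      by (rule continuous_on_compose[OF continuous_on_subset[OF cg U'U] continuous_on_subset[OF h3 gU'V]])
    have i1: "inj_on (\<psi> \<circ> g) U'"
    proof (rule inj_onI)
      fix x z assume "x \<in> U'" "z \<in> U'" "(\<psi> \<circ> g) x = (\<psi> \<circ> g) z"
      hence e: "\<psi>' (\<psi> (g x)) = \<psi>' (\<psi> (g z))" by simp
      have gx: "g x \<in> V" "g z \<in> V" using gU'V \<open>x \<in> U'\<close> \<open>z \<in> U'\<close> by blast+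
      have "g x = g z"
      proof -
        have "g x = \<psi>' (\<psi> (g x))" by (rule sym[OF h1[OF gx(1)]])
        also have "\<dots> = \<psi>' (\<psi> (g z))" by (rule e)
        also have "\<dots> = g z" by (rule h1[OF gx(2)])
        finally show ?thesis .
      qed
      moreover have "x \<in> U" "z \<in> U" using U'U \<open>x \<in> U'\<close> \<open>z \<in> U'\<close> by blast+
      ultimately show "x = z" using inj_onD[OF ig] by blast
    qed
    have "open ((\<psi> \<circ> g) ` U')" using invariance_of_domain[OF c1 oU' i1] .
    moreover have "(\<psi> \<circ> g) ` U' \<subseteq> W" using h2 gU'V by auto
    ultimately have "openin (top_of_set W) ((\<psi> \<circ> g) ` U')" using open_subset by blast
    hence "openin (top_of_set V) (\<psi>' ` ((\<psi> \<circ> g) ` U'))"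
      using homeomorphism_imp_open_map[OF homeomorphism_symD[OF ch(4)]] by blast
    moreover have "\<psi>' ` ((\<psi> \<circ> g) ` U') = g ` U'"
    proof -
      have "\<And>x. x \<in> U' \<Longrightarrow> \<psi>' (\<psi> (g x)) = g x" using h1 gU'V by blast
      hence "(\<lambda>x. \<psi>' ((\<psi> \<circ> g) x)) ` U' = g ` U'" by (intro image_cong) auto
      thus ?thesis by (simp only: image_image)
    qed
    ultimately have "openin (top_of_set V) (g ` U')" by simp
    hence "openin (top_of_set R) (g ` U')" by (rule openin_trans[OF _ ch(2)])
    moreover have "y \<in> g ` U'" using u ch(1) unfolding U'_def by auto
    moreover have "g ` U' \<subseteq> g ` U" using U'U by auto
    ultimately show "\<exists>T. openin (top_of_set R) T \<and> y \<in> T \<and> T \<subseteq> g ` U" by blast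
  qed
qed

lemma LE_transfer:
  fixes R :: "('a::topological_space) set" and X :: "('b::topological_space) set"
  assumes "R homeomorphic X" "LE X" shows "LE R"
  unfolding LE_def
proof
  fix p assume p: "p \<in> R"
  obtain h k where hk: "homeomorphism R X h k" using assms(1) unfolding homeomorphic_def by blast
  have "h p \<in> X" using homeomorphism_image1[OF hk] p by blast
  then obtain V and W :: "complex set" and \<psi> \<psi>' where ch: "h p \<in> V" "openin (top_of_set X) V" "open W" "homeomorphism V W \<psi> \<psi>'"
    using assms(2) unfolding LE_def by meson
  have VX: "V \<subseteq> X" using ch(2) openin_subset by fastforce
  have o: "openin (top_of_set R) (k ` V)" using homeomorphism_imp_open_map[OF homeomorphism_symD[OF hk] ch(2)] .
  have kVR: "k ` V \<subseteq> R" using o openin_subset by fastforce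
  have "h ` (k ` V) = V"
  proof -
    have "\<And>y. y \<in> V \<Longrightarrow> h (k y) = y" using homeomorphism_apply2[OF hk] VX by blast
    thus ?thesis by (simp add: image_image)
  qed
  hence h1: "homeomorphism (k ` V) V h k" using homeomorphism_of_subsets[OF hk kVR VX] by blast
  have "homeomorphism (k ` V) W (\<psi> \<circ> h) (k \<circ> \<psi>')" using homeomorphism_compose[OF h1 ch(4)] .
  moreover have "p \<in> k ` V" using homeomorphism_apply1[OF hk p] ch(1) by (metis image_eqI)
  ultimately show "\<exists>V W \<psi> \<psi>'. p \<in> V \<and> openin (top_of_set R) V \<and> open (W::complex set) \<and> homeomorphism V W \<psi> \<psi>'"
    using o ch(3) by blast
qed

lemma planar_IOD:
  fixes R :: "('a::topological_space) set" and X :: "complex set"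
  assumes "R homeomorphic X" shows "IOD R"
  unfolding IOD_def
proof (intro allI impI)
  fix U :: "complex set" and g
  assume a: "open U \<and> continuous_on U g \<and> inj_on g U \<and> g ` U \<subseteq> R"
  hence oU: "open U" and cg: "continuous_on U g" and ig: "inj_on g U" and gR: "g ` U \<subseteq> R" by auto
  obtain h k where hk: "homeomorphism R X h k" using assms(1) unfolding homeomorphic_def by blast
  have c: "continuous_on U (h \<circ> g)"
    by (rule continuous_on_compose[OF cg continuous_on_subset[OF homeomorphism_cont1[OF hk] gR]])
  have i: "inj_on (h \<circ> g) U"
  proof (rule inj_onI)
    fix x z assume "x \<in> U" "z \<in> U" "(h \<circ> g) x = (h \<circ> g) z"
    hence "k (h (g x)) = k (h (g z))" by simp
    moreover have gx: "g x \<in> R" "g z \<in> R" using gR \<open>x \<in> U\<close> \<open>z \<in> U\<close> by blast+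
    ultimately have e: "k (h (g x)) = k (h (g z))" by simp
    have "g x = g z"
    proof -
      have "g x = k (h (g x))" by (rule sym[OF homeomorphism_apply1[OF hk gx(1)]])
      also have "\<dots> = k (h (g z))" by (rule e)
      also have "\<dots> = g z" by (rule homeomorphism_apply1[OF hk gx(2)])
      finally show ?thesis .
    qed
    thus "x = z" using inj_onD[OF ig] \<open>x \<in> U\<close> \<open>z \<in> U\<close> by blast
  qed
  have "open ((h \<circ> g) ` U)" using invariance_of_domain[OF c oU i] .
  moreover have "(h \<circ> g) ` U \<subseteq> X" using homeomorphism_image1[OF hk] gR by auto
  ultimately have "openin (top_of_set X) ((h \<circ> g) ` U)" using open_subset by blast
  hence "openin (top_of_set R) (k ` ((h \<circ> g) ` U))"
    using homeomorphism_imp_open_map[OF homeomorphism_symD[OF hk]] by blast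
  moreover have "k ` ((h \<circ> g) ` U) = g ` U"
  proof -
    have "\<And>x. x \<in> U \<Longrightarrow> k (h (g x)) = g x" using homeomorphism_apply1[OF hk] gR by blast
    hence "(\<lambda>x. k ((h \<circ> g) x)) ` U = g ` U" by (intro image_cong) auto
    thus ?thesis by (simp only: image_image)
  qed
  ultimately show "openin (top_of_set R) (g ` U)" by simp
qed




lemma circ_facts:
  fixes z w :: complex and y :: real
  assumes z: "cmod z = 1"
  shows "cmod w = 1 \<Longrightarrow> Re (w * cnj z) > 0 \<Longrightarrow> z * Complex (sqrt (1 - (Im (w * cnj z))\<^sup>2)) (Im (w * cnj z)) = w"
    and "cmod w = 1 \<Longrightarrow> Re (w * cnj z) > 0 \<Longrightarrow> \<bar>Im (w * cnj z)\<bar> < 1"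
    and "\<bar>y\<bar> < 1 \<Longrightarrow> Im (z * Complex (sqrt (1 - y\<^sup>2)) y * cnj z) = y"
    and "\<bar>y\<bar> < 1 \<Longrightarrow> cmod (z * Complex (sqrt (1 - y\<^sup>2)) y) = 1"
    and "\<bar>y\<bar> < 1 \<Longrightarrow> Re (z * Complex (sqrt (1 - y\<^sup>2)) y * cnj z) > 0"
proof -
  have zz: "z * cnj z = 1" using z complex_norm_square[of z] by simp
  have zz': "(Re z)\<^sup>2 + (Im z)\<^sup>2 = 1" using z cmod_power2[of z] by simp
  {
    assume w: "cmod w = 1" and r: "Re (w * cnj z) > 0"
    define u where "u = w * cnj z"
    have nu: "cmod u = 1" using w z unfolding u_def by (simp add: norm_mult)
    have uu: "(Re u)\<^sup>2 + (Im u)\<^sup>2 = 1" using nu cmod_power2[of u] by simp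
    have "sqrt (1 - (Im u)\<^sup>2) = Re u" using uu r unfolding u_def[symmetric]
      by (intro real_sqrt_unique) auto
    hence "Complex (sqrt (1 - (Im u)\<^sup>2)) (Im u) = u" by (simp add: complex_eq_iff)
    hence "z * Complex (sqrt (1 - (Im u)\<^sup>2)) (Im u) = z * (w * cnj z)" unfolding u_def by simp
    also have "\<dots> = w * (z * cnj z)" by (simp add: algebra_simps)
    also have "\<dots> = w" using zz by simp
    finally show "z * Complex (sqrt (1 - (Im (w * cnj z))\<^sup>2)) (Im (w * cnj z)) = w" unfolding u_def .
    have "(Im u)\<^sup>2 < 1" using uu r unfolding u_def[symmetric] by (smt (verit) zero_less_power)
    thus "\<bar>Im (w * cnj z)\<bar> < 1" unfolding u_def by (simp add: abs_square_less_1)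
  }
  {
    assume y: "\<bar>y\<bar> < 1"
    have y2: "y\<^sup>2 < 1" using y by (simp add: abs_square_less_1)
    have s: "sqrt (1 - y\<^sup>2) > 0" using y2 by simp
    have e: "z * Complex (sqrt (1 - y\<^sup>2)) y * cnj z = Complex (sqrt (1 - y\<^sup>2)) y"
    proof -
      have "z * Complex (sqrt (1 - y\<^sup>2)) y * cnj z = Complex (sqrt (1 - y\<^sup>2)) y * (z * cnj z)" by (simp only: ac_simps)
      thus ?thesis using zz by (metis mult.right_neutral)
    qed
    show "Im (z * Complex (sqrt (1 - y\<^sup>2)) y * cnj z) = y" unfolding e by simp
    show "Re (z * Complex (sqrt (1 - y\<^sup>2)) y * cnj z) > 0" unfolding e using s by simp
    have "(cmod (Complex (sqrt (1 - y\<^sup>2)) y))\<^sup>2 = 1" unfolding cmod_power2 using y2 by simp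
    hence "cmod (Complex (sqrt (1 - y\<^sup>2)) y) = 1" using norm_ge_zero[of "Complex (sqrt (1 - y\<^sup>2)) y"] by (simp add: power2_eq_1_iff)
    thus "cmod (z * Complex (sqrt (1 - y\<^sup>2)) y) = 1" using z by (simp add: norm_mult)
  }
qed

lemma LE_torus: "LE (sphere (0::complex) 1 \<times> sphere (0::complex) 1)"
  unfolding LE_def
proof
  let ?T = "sphere (0::complex) 1 \<times> sphere (0::complex) 1"
  fix p assume p: "p \<in> ?T"
  obtain z1 z2 where pz: "p = (z1, z2)" by (cases p)
  have z1: "cmod z1 = 1" and z2: "cmod z2 = 1" using p pz by auto
  define V where "V = ?T \<inter> {q. 0 < Re (fst q * cnj z1)} \<inter> {q. 0 < Re (snd q * cnj z2)}"
  define W where "W = {x::complex. \<bar>Re x\<bar> < 1} \<inter> {x. \<bar>Im x\<bar> < 1}"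
  define \<psi> where "\<psi> = (\<lambda>q::complex\<times>complex. Complex (Im (fst q * cnj z1)) (Im (snd q * cnj z2)))"
  define \<psi>' where "\<psi>' = (\<lambda>x. (z1 * Complex (sqrt (1 - (Re x)\<^sup>2)) (Re x), z2 * Complex (sqrt (1 - (Im x)\<^sup>2)) (Im x)))"
  have "Re z1 * Re z1 + Im z1 * Im z1 = 1" "Re z2 * Re z2 + Im z2 * Im z2 = 1"
    using cmod_power2[of z1] cmod_power2[of z2] z1 z2 by (simp_all add: power2_eq_square)
  hence pV: "p \<in> V" unfolding V_def using p pz by simp
  have o1: "open ({q::complex\<times>complex. 0 < Re (fst q * cnj z1)} \<inter> {q. 0 < Re (snd q * cnj z2)})"
    by (intro open_Int open_Collect_less continuous_intros)
  have oV: "openin (top_of_set ?T) V" unfolding V_def using openin_open_Int[OF o1, of ?T] by (simp add: Int_assoc)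
  have oW: "open W" unfolding W_def by (intro open_Int open_Collect_less continuous_intros)
  have hom: "homeomorphism V W \<psi> \<psi>'"
  proof (rule homeomorphismI)
    show "continuous_on V \<psi>" unfolding \<psi>_def by (intro continuous_intros)
    show "continuous_on W \<psi>'" unfolding \<psi>'_def by (intro continuous_intros)
    show "\<psi> ` V \<subseteq> W"
      unfolding V_def W_def \<psi>_def using circ_facts(2)[OF z1] circ_facts(2)[OF z2] by auto
    show "\<psi>' ` W \<subseteq> V"
      unfolding V_def W_def \<psi>'_def using circ_facts(4,5)[OF z1] circ_facts(4,5)[OF z2] by auto
    show "\<psi>' (\<psi> x) = x" if "x \<in> V" for x
      using that unfolding V_def \<psi>_def \<psi>'_def using circ_facts(1)[OF z1, of "fst x"] circ_facts(1)[OF z2, of "snd x"]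
      by (cases x) auto
    show "\<psi> (\<psi>' y) = y" if "y \<in> W" for y
      using that unfolding W_def \<psi>_def \<psi>'_def using circ_facts(3)[OF z1, of "Re y"] circ_facts(3)[OF z2, of "Im y"]
      by (simp add: complex_eq_iff)
  qed
  show "\<exists>V W \<psi> \<psi>'. p \<in> V \<and> openin (top_of_set ?T) V \<and> open (W::complex set) \<and> homeomorphism V W \<psi> \<psi>'"
    using pV oV oW hom by blast
qed




lemma sc_finite: "simplicial_complex K \<Longrightarrow> finite (\<Union>K)"
  unfolding simplicial_complex_def by auto

lemma sc_sub: "simplicial_complex K \<Longrightarrow> s \<in> K \<Longrightarrow> t \<subseteq> s \<Longrightarrow> t \<noteq> {} \<Longrightarrow> t \<in> K"
  unfolding simplicial_complex_def by blast

lemma real_sum: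
  assumes K: "simplicial_complex K" and f: "f \<in> realization K"
    and S: "{w. f w \<noteq> 0} \<subseteq> S" "S \<subseteq> \<Union>K"
  shows "sum f S = 1"
proof -
  have "sum f (\<Union>K) = sum f S"
    by (rule sum.mono_neutral_right[OF sc_finite[OF K] S(2)]) (use S(1) in auto)
  thus ?thesis using f unfolding realization_def by simp
qed

lemma real_supp: "f \<in> realization K \<Longrightarrow> {w. f w \<noteq> 0} \<in> K"
  unfolding realization_def by simp

lemma real_nonneg: "f \<in> realization K \<Longrightarrow> 0 \<le> f w"
  unfolding realization_def by simp

lemma realI:
  assumes K: "simplicial_complex K" and "\<And>w. 0 \<le> f w" "{w. f w \<noteq> 0} \<in> K"
    and S: "{w. f w \<noteq> 0} \<subseteq> S" "S \<subseteq> \<Union>K" "sum f S = 1"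
  shows "f \<in> realization K"
proof -
  have "sum f (\<Union>K) = sum f S"
    by (rule sum.mono_neutral_right[OF sc_finite[OF K] S(2)]) (use S(1) in auto)
  thus ?thesis using assms unfolding realization_def by simp
qed

lemma tri_third:
  assumes "card t = 3" "a \<in> t" "b \<in> t" "a \<noteq> b"
  obtains c where "c \<notin> {a,b}" "t = {a,b,c}"
proof -
  have fin: "finite t" using assms(1) by (metis card.infinite zero_neq_numeral)
  have "card (t - {a,b}) = 1" using assms fin by (simp add: card_Diff_subset)
  then obtain c where c: "t - {a,b} = {c}" by (rule card_1_singletonE)
  hence "t = {a,b,c}" using assms by auto
  moreover have "c \<notin> {a,b}" using c by auto
  ultimately show ?thesis using that by blast
qed

lemma three_distinct:
  assumes "3 \<le> card S"
  obtains x y z where "x \<in> S" "y \<in> S" "z \<in> S" "x \<noteq> y" "x \<noteq> z" "y \<noteq> z"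
proof -
  from assms obtain x B where "S = insert x B" "x \<notin> B" "2 \<le> card B" "finite B"
    using card_le_Suc_iff[of 2 S] by (auto simp: numeral_3_eq_3)
  moreover from \<open>2 \<le> card B\<close> obtain y C where "B = insert y C" "y \<notin> C" "1 \<le> card C" "finite C"
    using card_le_Suc_iff[of 1 B] by (auto simp: numeral_2_eq_2)
  moreover from \<open>1 \<le> card C\<close> \<open>finite C\<close> obtain z where "z \<in> C" by (metis card.empty ex_in_conv not_one_le_zero)
  ultimately show ?thesis using that by blast
qed




lemma edge_le2:
  assumes K: "simplicial_complex K" and I: "IOD (realization K)" and e: "e \<in> K" "card e = 2"
  shows "card {t \<in> triangles_of K. e \<subseteq> t} \<le> 2"
proof (rule ccontr)
  assume "\<not> ?thesis"
  hence "3 \<le> card {t \<in> triangles_of K. e \<subseteq> t}" by simp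
  then obtain t1 t2 t3 where t: "t1 \<in> {t \<in> triangles_of K. e \<subseteq> t}" "t2 \<in> {t \<in> triangles_of K. e \<subseteq> t}"
     "t3 \<in> {t \<in> triangles_of K. e \<subseteq> t}" "t1 \<noteq> t2" "t1 \<noteq> t3" "t2 \<noteq> t3"
    by (rule three_distinct)
  obtain a b where ab: "e = {a,b}" "a \<noteq> b" using e(2) by (meson card_2_iff)
  have tK: "t1 \<in> K" "t2 \<in> K" "t3 \<in> K" and tc: "card t1 = 3" "card t2 = 3" "card t3 = 3"
    using t unfolding simplices_of_dim_def by auto
  have te: "a \<in> t1" "b \<in> t1" "a \<in> t2" "b \<in> t2" "a \<in> t3" "b \<in> t3" using t ab by auto
  obtain c1 where c1: "c1 \<notin> {a,b}" "t1 = {a,b,c1}" using tri_third[OF tc(1) te(1,2) ab(2)] by blast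
  obtain c2 where c2: "c2 \<notin> {a,b}" "t2 = {a,b,c2}" using tri_third[OF tc(2) te(3,4) ab(2)] by blast
  obtain c3 where c3: "c3 \<notin> {a,b}" "t3 = {a,b,c3}" using tri_third[OF tc(3) te(5,6) ab(2)] by blast
  have cc: "c1 \<noteq> c2" "c1 \<noteq> c3" "c2 \<noteq> c3" using t(4-6) c1 c2 c3 by auto
  define g where "g = (\<lambda>(z::complex) w. if w = a then (1 - \<bar>Im z\<bar> + Re z)/2 else if w = b then (1 - \<bar>Im z\<bar> - Re z)/2
     else if w = c1 then max (Im z) 0 else if w = c2 then max (- Im z) 0 else 0)"
  define U where "U = {z::complex. \<bar>Re z\<bar> + \<bar>Im z\<bar> < 1}"
  have ga: "g z a = (1 - \<bar>Im z\<bar> + Re z)/2" for z unfolding g_def by simp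
  have gb: "g z b = (1 - \<bar>Im z\<bar> - Re z)/2" for z unfolding g_def using ab by simp
  have gc1: "g z c1 = max (Im z) 0" for z unfolding g_def using c1 by simp
  have gc2: "g z c2 = max (- Im z) 0" for z unfolding g_def using c2 cc by simp
  have go: "g z w = 0" if "w \<notin> {a,b,c1,c2}" for z w unfolding g_def using that by simp
  have oU: "open U" unfolding U_def by (intro open_Collect_less continuous_intros)
  have cg: "continuous_on U g"
  proof (rule continuous_on_coordinatewise_then_product)
    fix w
    show "continuous_on U (\<lambda>z. g z w)"
    proof (cases "w \<in> {a,b,c1,c2}")
      case True
      then consider "w = a" | "w = b" | "w = c1" | "w = c2" by blast
      thus ?thesis by cases (auto simp: ga gb gc1 gc2 intro!: continuous_intros)
    next
      case False thus ?thesis using go by simp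
    qed
  qed
  have ig: "inj_on g U"
  proof (rule inj_onI)
    fix z z' assume "z \<in> U" "z' \<in> U" "g z = g z'"
    hence "g z a - g z b = g z' a - g z' b" "g z c1 - g z c2 = g z' c1 - g z' c2" by simp_all
    moreover have d1: "g x a - g x b = Re x" for x unfolding ga gb by (simp add: field_simps)
    moreover have d2: "g x c1 - g x c2 = Im x" for x unfolding gc1 gc2 by (simp add: max_def)
    ultimately have "Re z = Re z'" "Im z = Im z'" by metis+
    thus "z = z'" by (simp add: complex_eq_iff)
  qed
  have abK: "{a,b,c1,c2} \<subseteq> \<Union>K" using tK c1 c2 by auto
  have gR: "g ` U \<subseteq> realization K"
  proof
    fix f assume "f \<in> g ` U"
    then obtain z where z: "z \<in> U" "f = g z" by auto
    have zU: "\<bar>Re z\<bar> + \<bar>Im z\<bar> < 1" using z U_def by simp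
    have nn: "0 \<le> f w" for w
      using zU unfolding z(2) by (cases "w \<in> {a,b,c1,c2}") (auto simp: ga gb gc1 gc2 go)
    have sup: "{w. f w \<noteq> 0} = (if Im z > 0 then t1 else if Im z < 0 then t2 else e)"
    proof -
      have fa: "f a \<noteq> 0" "f b \<noteq> 0" using zU unfolding z(2) ga gb by auto
      have "w \<in> {w. f w \<noteq> 0} \<longleftrightarrow> w \<in> (if Im z > 0 then t1 else if Im z < 0 then t2 else e)" for w
      proof (cases "w \<in> {a,b,c1,c2}")
        case True
        then consider "w = a" | "w = b" | "w = c1" | "w = c2" by blast
        thus ?thesis using fa c1 c2 cc ab unfolding z(2) by cases (auto simp: gc1 gc2 max_def)
      next
        case False thus ?thesis using go c1 c2 ab unfolding z(2) by auto
      qed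
      thus ?thesis by blast
    qed
    have supK: "{w. f w \<noteq> 0} \<in> K" unfolding sup using tK e by simp
    have sub: "{w. f w \<noteq> 0} \<subseteq> {a,b,c1,c2}" unfolding sup using c1 c2 ab by auto
    have "sum f {a,b,c1,c2} = f a + f b + f c1 + f c2" using ab c1 c2 cc by (auto simp: add.assoc)
    also have "\<dots> = 1" unfolding z(2) ga gb gc1 gc2 by (simp add: max_def field_simps)
    finally show "f \<in> realization K" by (rule realI[OF K nn supK sub abK])
  qed
  have "openin (top_of_set (realization K)) (g ` U)" using I oU cg ig gR unfolding IOD_def by blast
  then obtain Op where Op: "open Op" "g ` U = realization K \<inter> Op" by (auto simp: openin_open)
  define \<gamma> where "\<gamma> = (\<lambda>(s::real) w. if w = a then (1 - s)/2 else if w = b then (1 - s)/2 else if w = c3 then s else 0)"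
  have c\<gamma>: "continuous_on UNIV \<gamma>"
  proof (rule continuous_on_coordinatewise_then_product)
    fix w show "continuous_on UNIV (\<lambda>s. \<gamma> s w)" unfolding \<gamma>_def
      by (cases "w = a"; cases "w = b"; cases "w = c3") (simp_all add: continuous_intros)
  qed
  have "0 \<in> U" unfolding U_def by simp
  moreover have "\<gamma> 0 = g 0"
  proof
    fix w show "\<gamma> 0 w = g 0 w" unfolding \<gamma>_def g_def by simp
  qed
  ultimately have "\<gamma> 0 \<in> Op" using Op(2) by blast
  moreover have "open (\<gamma> -` Op)" using c\<gamma> Op(1) continuous_on_open_vimage[of UNIV \<gamma>] by simp
  ultimately obtain \<epsilon> where \<epsilon>: "\<epsilon> > 0" "ball 0 \<epsilon> \<subseteq> \<gamma> -` Op" by (meson openE vimageI)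
  define s where "s = min (\<epsilon>/2) (1/2)"
  have s: "0 < s" "s < 1" "s \<in> ball 0 \<epsilon>" unfolding s_def using \<epsilon> by auto
  have "\<gamma> s \<in> realization K"
  proof (rule realI[OF K])
    show "0 \<le> \<gamma> s w" for w unfolding \<gamma>_def using s by simp
    have "{w. \<gamma> s w \<noteq> 0} = t3" unfolding \<gamma>_def c3 using s c3 ab by auto
    thus "{w. \<gamma> s w \<noteq> 0} \<in> K" "{w. \<gamma> s w \<noteq> 0} \<subseteq> t3" using tK by auto
    show "t3 \<subseteq> \<Union>K" using tK by auto
    have "sum (\<gamma> s) {a,b,c3} = \<gamma> s a + \<gamma> s b + \<gamma> s c3" using ab c3 by (auto simp: add.assoc)
    also have "\<dots> = 1" unfolding \<gamma>_def using ab c3 by auto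
    finally show "sum (\<gamma> s) t3 = 1" unfolding c3(2) .
  qed
  moreover have "\<gamma> s \<in> Op" using s \<epsilon> by (auto simp: subset_iff dist_real_def)
  ultimately have "\<gamma> s \<in> g ` U" using Op(2) by blast
  then obtain z where "\<gamma> s = g z" by auto
  hence "\<gamma> s c3 = g z c3" by simp
  moreover have "g z c3 = 0" using go[of c3] c3 cc by auto
  moreover have "\<gamma> s c3 = s" unfolding \<gamma>_def using c3 by simp
  ultimately show False using s by simp
qed




lemma coord_cont: "continuous_on A (\<lambda>f::'v\<Rightarrow>real. f a)"
  by (rule continuous_on_subset[OF continuous_on_product_coordinates]) simp

lemma chart_restrict:
  fixes R :: "('a::topological_space) set" and W :: "complex set"
  assumes V: "openin (top_of_set R) V" and W: "open W" and h: "homeomorphism V W \<psi> \<psi>'"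
    and Q: "openin (top_of_set R) Q" "Q \<subseteq> V"
  shows "open (\<psi> ` Q)"
proof -
  have "V \<subseteq> R" using V openin_subset by fastforce
  hence "openin (top_of_set V) Q" using openin_subset_trans[OF Q(1) Q(2)] by blast
  hence "openin (top_of_set W) (\<psi> ` Q)" by (rule homeomorphism_imp_open_map[OF h])
  thus ?thesis using W openin_open_trans by blast
qed

lemma edge_ge2:
  assumes K: "simplicial_complex K" and L: "LE (realization K)" and e: "e \<in> K" "card e = 2"
  shows "2 \<le> card {t \<in> triangles_of K. e \<subseteq> t}"
proof (rule ccontr)
  let ?R = "realization K"
  define TS where "TS = {t \<in> triangles_of K. e \<subseteq> t}"
  assume "\<not> 2 \<le> card {t \<in> triangles_of K. e \<subseteq> t}"
  hence c1: "card TS \<le> Suc 0" unfolding TS_def by simp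
  have finK: "finite K" using K unfolding simplicial_complex_def by blast
  have finTS: "finite TS" unfolding TS_def simplices_of_dim_def using finK by simp
  have TSeq: "\<And>t t'. t \<in> TS \<Longrightarrow> t' \<in> TS \<Longrightarrow> t = t'" using c1 card_le_Suc0_iff_eq[OF finTS] by blast
  obtain a b where ab: "e = {a,b}" "a \<noteq> b" using e(2) by (meson card_2_iff)
  define Z where "Z = e \<union> \<Union>TS"
  have TSK: "TS \<subseteq> K" unfolding TS_def simplices_of_dim_def by auto
  have ZK: "Z \<subseteq> \<Union>K" unfolding Z_def using TSK e by auto
  have finZ: "finite Z" using ZK sc_finite[OF K] finite_subset by blast
  have uniq: "c = c'" if cc: "c \<in> Z - e" "c' \<in> Z - e" for c c'
  proof -
    obtain t where t: "t \<in> TS" "c \<in> t" using cc(1) unfolding Z_def by auto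
    obtain t' where t': "t' \<in> TS" "c' \<in> t'" using cc(2) unfolding Z_def by auto
    have "t = t'" using TSeq t t' by blast
    have "card t = 3" "e \<subseteq> t" using t unfolding TS_def simplices_of_dim_def by auto
    then obtain d where "d \<notin> {a,b}" "t = {a,b,d}" using tri_third ab by (metis insert_subset)
    thus "c = c'" using t t' \<open>t = t'\<close> cc ab by auto
  qed
  define S1 where "S1 = {f \<in> ?R. 0 < f a \<and> 0 < f b}"
  have supZ: "{w. f w \<noteq> 0} \<subseteq> Z" if f: "f \<in> S1" for f
  proof
    fix w assume w: "w \<in> {w. f w \<noteq> 0}"
    show "w \<in> Z"
    proof (cases "w \<in> e")
      case True thus ?thesis unfolding Z_def by simp
    next
      case False
      have sK: "{w. f w \<noteq> 0} \<in> K" using f real_supp unfolding S1_def by blast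
      have "{a,b,w} \<subseteq> {w. f w \<noteq> 0}" using f w unfolding S1_def by auto
      hence "{a,b,w} \<in> K" using sc_sub[OF K sK] by blast
      moreover have "card {a,b,w} = 3" using False ab by auto
      ultimately have "{a,b,w} \<in> TS" unfolding TS_def simplices_of_dim_def using ab by auto
      thus ?thesis unfolding Z_def by blast
    qed
  qed
  have sumZ: "sum f Z = f a + f b + sum f (Z - e)" if "f \<in> S1" for f
  proof -
    have "sum f Z = sum f (Z - e) + sum f e" using sum.subset_diff[of e Z f] finZ unfolding Z_def by auto
    thus ?thesis using ab by simp
  qed
  have sum1: "sum f Z = 1" if "f \<in> S1" for f
    using real_sum[OF K _ supZ[OF that] ZK] that unfolding S1_def by blast
  have val: "f w = 1 - f a - f b" if f: "f \<in> S1" and w: "w \<in> Z - e" for f w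
  proof -
    have "Z - e = {w}" using uniq w by blast
    thus ?thesis using sumZ[OF f] sum1[OF f] by simp
  qed
  have val0: "f w = 0" if f: "f \<in> S1" and w: "w \<notin> Z" for f w using supZ[OF f] w by blast
  have imnn: "0 \<le> 1 - f a - f b" if f: "f \<in> S1" for f
  proof -
    have "0 \<le> sum f (Z - e)" using f unfolding S1_def by (intro sum_nonneg) (auto simp: real_nonneg)
    thus ?thesis using sumZ[OF f] sum1[OF f] by simp
  qed
  define \<phi> where "\<phi> = (\<lambda>f::'a\<Rightarrow>real. Complex (f a - f b) (1 - f a - f b))"
  have c\<phi>: "continuous_on A \<phi>" for A unfolding \<phi>_def
    by (intro continuous_intros coord_cont)
  have i\<phi>: "f = g" if "f \<in> S1" "g \<in> S1" "\<phi> f = \<phi> g" for f g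
  proof
    fix w
    have "f a - f b = g a - g b" "1 - f a - f b = 1 - g a - g b" using that(3) unfolding \<phi>_def by simp_all
    hence fa: "f a = g a" "f b = g b" by linarith+
    show "f w = g w"
    proof (cases "w \<in> e")
      case True thus ?thesis using fa ab by auto
    next
      case False
      show ?thesis
      proof (cases "w \<in> Z")
        case True thus ?thesis using val[OF that(1)] val[OF that(2)] False fa by simp
      next
        case False thus ?thesis using val0[OF that(1)] val0[OF that(2)] by simp
      qed
    qed
  qed
  define p where "p = (\<lambda>w. if w = a then 1/2 else if w = b then 1/2 else (0::real))"
  have pR: "p \<in> ?R"
  proof (rule realI[OF K])
    show "0 \<le> p w" for w unfolding p_def by simp
    have "{w. p w \<noteq> 0} = e" unfolding p_def ab by auto
    thus "{w. p w \<noteq> 0} \<in> K" "{w. p w \<noteq> 0} \<subseteq> e" using e by auto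
    show "e \<subseteq> \<Union>K" using e by auto
    show "sum p e = 1" unfolding ab p_def using ab by simp
  qed
  have pS1: "p \<in> S1" unfolding S1_def using pR ab by (simp add: p_def)
  have p0: "\<phi> p = 0" unfolding \<phi>_def p_def using ab by (simp add: complex_eq_iff)
  obtain V and W :: "complex set" and \<psi> \<psi>' where ch: "p \<in> V" "openin (top_of_set ?R) V" "open W" "homeomorphism V W \<psi> \<psi>'"
    using L pR unfolding LE_def by meson
  have oS1: "openin (top_of_set ?R) S1"
  proof -
    have "open ({f::'a\<Rightarrow>real. 0 < f a} \<inter> {f. 0 < f b})"
      by (intro open_Int open_Collect_less continuous_intros coord_cont)
    moreover have "S1 = ?R \<inter> ({f::'a\<Rightarrow>real. 0 < f a} \<inter> {f. 0 < f b})" unfolding S1_def by auto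
    ultimately show ?thesis by (simp add: openin_open_Int)
  qed
  define Q where "Q = V \<inter> S1"
  have oQ: "open (\<psi> ` Q)" using chart_restrict[OF ch(2) ch(3) ch(4)] oS1 ch(2) unfolding Q_def by blast
  have QS1: "Q \<subseteq> S1" and QV: "Q \<subseteq> V" unfolding Q_def by auto
  have bk: "\<psi>' (\<psi> q) = q" if "q \<in> Q" for q using homeomorphism_apply1[OF ch(4)] that QV by blast
  have imgW: "\<psi> ` Q \<subseteq> W" using homeomorphism_image1[OF ch(4)] QV by blast
  have cth: "continuous_on (\<psi> ` Q) (\<phi> \<circ> \<psi>')"
    by (rule continuous_on_compose[OF continuous_on_subset[OF homeomorphism_cont2[OF ch(4)] imgW] c\<phi>])
  have ith: "inj_on (\<phi> \<circ> \<psi>') (\<psi> ` Q)"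
  proof (rule inj_onI)
    fix y y' assume y: "y \<in> \<psi> ` Q" "y' \<in> \<psi> ` Q" "(\<phi> \<circ> \<psi>') y = (\<phi> \<circ> \<psi>') y'"
    obtain q where q: "q \<in> Q" "y = \<psi> q" using y(1) by blast
    obtain q' where q': "q' \<in> Q" "y' = \<psi> q'" using y(2) by blast
    have "\<phi> (\<psi>' (\<psi> q)) = \<phi> (\<psi>' (\<psi> q'))" using y(3) unfolding q(2) q'(2) by (simp only: comp_apply)
    hence "\<phi> q = \<phi> q'" by (simp only: bk[OF q(1)] bk[OF q'(1)])
    hence "q = q'" using i\<phi> QS1 q q' by blast
    thus "y = y'" using q q' by simp
  qed
  have "open ((\<phi> \<circ> \<psi>') ` (\<psi> ` Q))" by (rule invariance_of_domain[OF cth oQ ith])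
  moreover have "(\<phi> \<circ> \<psi>') ` (\<psi> ` Q) = \<phi> ` Q"
  proof -
    have "(\<lambda>q. (\<phi> \<circ> \<psi>') (\<psi> q)) ` Q = \<phi> ` Q"
    proof (rule image_cong)
      fix q assume "q \<in> Q" thus "(\<phi> \<circ> \<psi>') (\<psi> q) = \<phi> q" by (simp only: comp_apply bk[OF \<open>q \<in> Q\<close>])
    qed simp
    thus ?thesis by (simp only: image_image)
  qed
  ultimately have oP: "open (\<phi> ` Q)" by simp
  have "p \<in> Q" using pS1 ch(1) unfolding Q_def by blast
  hence "\<phi> p \<in> \<phi> ` Q" by (rule imageI)
  hence "0 \<in> \<phi> ` Q" unfolding p0 .
  then obtain \<epsilon> where \<epsilon>: "\<epsilon> > 0" "ball 0 \<epsilon> \<subseteq> \<phi> ` Q" using oP openE by metis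
  have "dist 0 (Complex 0 (- \<epsilon>/2)) < \<epsilon>" using \<epsilon>(1) by (simp add: dist_norm cmod_def)
  hence "Complex 0 (- \<epsilon>/2) \<in> \<phi> ` Q" using \<epsilon>(2) by (auto simp only: mem_ball subset_iff)
  then obtain f where f: "f \<in> Q" "\<phi> f = Complex 0 (- \<epsilon>/2)" by (auto simp only: image_iff)
  have "Im (\<phi> f) = 1 - f a - f b" unfolding \<phi>_def by simp
  hence "1 - f a - f b = - \<epsilon>/2" unfolding f(2) by simp
  moreover have "0 \<le> 1 - f a - f b" using imnn f(1) QS1 by blast
  ultimately show False using \<epsilon>(1) by simp
qed

lemma vertex_edge:
  assumes K: "simplicial_complex K" and L: "LE (realization K)" and v: "v \<in> \<Union>K"
  shows "\<exists>u. u \<noteq> v \<and> {v,u} \<in> K"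
proof (rule ccontr)
  assume no: "\<not> ?thesis"
  let ?R = "realization K"
  define \<delta> where "\<delta> = (\<lambda>w. if w = v then 1 else (0::real))"
  have vK: "{v} \<in> K" using v sc_sub[OF K] by blast
  have dR: "\<delta> \<in> ?R"
  proof (rule realI[OF K])
    show "0 \<le> \<delta> w" for w unfolding \<delta>_def by simp
    have "{w. \<delta> w \<noteq> 0} = {v}" unfolding \<delta>_def by auto
    thus "{w. \<delta> w \<noteq> 0} \<in> K" "{w. \<delta> w \<noteq> 0} \<subseteq> {v}" using vK by auto
    show "{v} \<subseteq> \<Union>K" using v by auto
    show "sum \<delta> {v} = 1" unfolding \<delta>_def by simp
  qed
  define S0 where "S0 = {f \<in> ?R. 0 < f v}"
  have S0eq: "S0 = {\<delta>}"
  proof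
    show "{\<delta>} \<subseteq> S0" unfolding S0_def using dR by (simp add: \<delta>_def)
    show "S0 \<subseteq> {\<delta>}"
    proof
      fix f assume f: "f \<in> S0"
      have sK: "{w. f w \<noteq> 0} \<in> K" using f real_supp unfolding S0_def by blast
      have sub: "{w. f w \<noteq> 0} \<subseteq> {v}"
      proof
        fix w assume w: "w \<in> {w. f w \<noteq> 0}"
        show "w \<in> {v}"
        proof (rule ccontr)
          assume "w \<notin> {v}"
          moreover have "{v,w} \<subseteq> {w. f w \<noteq> 0}" using f w unfolding S0_def by auto
          ultimately show False using no sc_sub[OF K sK] by blast
        qed
      qed
      have "sum f {v} = 1" using real_sum[OF K _ sub] f v unfolding S0_def by blast
      hence "f v = 1" by simp
      hence "f = \<delta>" using sub unfolding \<delta>_def by (auto simp: fun_eq_iff)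
      thus "f \<in> {\<delta>}" by simp
    qed
  qed
  obtain V and W :: "complex set" and \<psi> \<psi>' where ch: "\<delta> \<in> V" "openin (top_of_set ?R) V" "open W" "homeomorphism V W \<psi> \<psi>'"
    using L dR unfolding LE_def by meson
  have oS0: "openin (top_of_set ?R) S0"
  proof -
    have "open {f::'a\<Rightarrow>real. 0 < f v}" by (intro open_Collect_less continuous_intros coord_cont)
    moreover have "S0 = ?R \<inter> {f::'a\<Rightarrow>real. 0 < f v}" unfolding S0_def by auto
    ultimately show ?thesis by (simp add: openin_open_Int)
  qed
  have "open (\<psi> ` S0)" using chart_restrict[OF ch(2) ch(3) ch(4) oS0] ch(1) S0eq by blast
  thus False using S0eq by (metis image_empty image_insert not_open_singleton)
qed




lemma tri_iff: "t \<in> triangles_of K \<longleftrightarrow> t \<in> K \<and> card t = 3"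
  by (simp add: simplices_of_dim_def)

lemma edge_iff: "e \<in> edges_of K \<longleftrightarrow> e \<in> K \<and> card e = 2"
  by (simp add: simplices_of_dim_def numeral_2_eq_2)

lemma handshake:
  assumes N: "finite N" and F: "\<And>e. e \<in> F \<Longrightarrow> card e = 2 \<and> e \<subseteq> N"
  shows "(\<Sum>u\<in>N. card {x\<in>N. {u,x} \<in> F}) = 2 * card F"
proof -
  have finF: "finite F"
  proof (rule finite_subset)
    show "F \<subseteq> Pow N" using F by auto
  qed (use N in simp)
  have c1: "card {x\<in>N. {u,x} \<in> F} = card {e\<in>F. u \<in> e}" if u: "u \<in> N" for u
  proof (rule bij_betw_same_card)
    show "bij_betw (\<lambda>x. {u,x}) {x\<in>N. {u,x} \<in> F} {e\<in>F. u \<in> e}"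
    proof (rule bij_betwI')
      fix x y assume "x \<in> {x\<in>N. {u,x} \<in> F}" "y \<in> {x\<in>N. {u,x} \<in> F}"
      hence "card {u,x} = 2" "card {u,y} = 2" using F by auto
      hence "x \<noteq> u" "y \<noteq> u" by auto
      thus "({u,x} = {u,y}) = (x = y)" by (auto simp: doubleton_eq_iff)
    next
      fix x assume "x \<in> {x\<in>N. {u,x} \<in> F}" thus "{u,x} \<in> {e\<in>F. u \<in> e}" by simp
    next
      fix e assume e: "e \<in> {e\<in>F. u \<in> e}"
      hence "card e = 2" "e \<subseteq> N" using F by auto
      then obtain a b where ab: "e = {a,b}" "a \<noteq> b" by (meson card_2_iff)
      have "u = a \<or> u = b" using e ab by auto
      hence "\<exists>x. e = {u,x}" using ab by auto
      then obtain x where "e = {u,x}" by blast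
      thus "\<exists>x\<in>{x\<in>N. {u,x} \<in> F}. e = {u,x}" using e \<open>e \<subseteq> N\<close> by auto
    qed
  qed
  have "(\<Sum>u\<in>N. card {x\<in>N. {u,x} \<in> F}) = (\<Sum>u\<in>N. card {e\<in>F. u \<in> e})"
    using c1 by (rule sum.cong[OF refl])
  also have "\<dots> = (\<Sum>u\<in>N. \<Sum>e\<in>F. if u \<in> e then 1 else 0)"
  proof (rule sum.cong[OF refl])
    fix u show "card {e\<in>F. u \<in> e} = (\<Sum>e\<in>F. if u \<in> e then 1 else 0)"
      using sum.inter_filter[OF finF, of "\<lambda>_. (1::nat)" "\<lambda>e. u \<in> e"] by simp
  qed
  also have "\<dots> = (\<Sum>e\<in>F. \<Sum>u\<in>N. if u \<in> e then 1 else 0)" by (rule sum.swap)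
  also have "\<dots> = (\<Sum>e\<in>F. card e)"
  proof (rule sum.cong[OF refl])
    fix e assume "e \<in> F"
    hence eN: "e \<subseteq> N" using F by auto
    have "(\<Sum>u\<in>N. if u \<in> e then 1 else (0::nat)) = card {u\<in>N. u \<in> e}"
      using sum.inter_filter[OF N, of "\<lambda>_. (1::nat)" "\<lambda>u. u \<in> e"] by simp
    also have "{u\<in>N. u \<in> e} = e" using eN by auto
    finally show "(\<Sum>u\<in>N. if u \<in> e then 1 else 0) = card e" .
  qed
  also have "\<dots> = (\<Sum>e\<in>F. 2)" using F by (intro sum.cong) auto
  also have "\<dots> = 2 * card F" by simp
  finally show ?thesis .
qed




lemma delA:
  assumes scM: "simplicial_complex M" and M2: "\<And>e. e \<in> M \<Longrightarrow> card e = 2 \<Longrightarrow> card {t\<in>triangles_of M. e\<subseteq>t} = 2"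
    and sm: "simplicial_map i D M" and injt: "\<forall>t\<in>triangles_of D. inj_on i t"
    and injT: "inj_on (image i) (triangles_of D)"
    and e': "e' \<in> image i ` interior_edges D" and T: "T \<in> triangles_of M" "e' \<subseteq> T"
  shows "T \<in> image i ` triangles_of D"
proof -
  obtain e0 where e0: "e0 \<in> interior_edges D" "e' = i ` e0" using e' by blast
  have e0D: "e0 \<in> D" "card e0 = 2" and c2: "card {t\<in>triangles_of D. e0 \<subseteq> t} = 2"
    using e0(1) unfolding interior_edges_def edge_iff by auto
  obtain t1 t2 where tt: "{t\<in>triangles_of D. e0 \<subseteq> t} = {t1,t2}" "t1 \<noteq> t2" using c2 by (meson card_2_iff)
  have t1: "t1 \<in> triangles_of D" "e0 \<subseteq> t1" and t2: "t2 \<in> triangles_of D" "e0 \<subseteq> t2"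
    using tt(1) by blast+
  have j1: "inj_on i t1" "inj_on i t2" using injt t1 t2 by blast+
  have it1: "i ` t1 \<in> triangles_of M"
    using t1 sm j1 unfolding simplicial_map_def tri_iff by (auto simp: card_image)
  have it2: "i ` t2 \<in> triangles_of M"
    using t2 sm j1 unfolding simplicial_map_def tri_iff by (auto simp: card_image)
  have ne: "i ` t1 \<noteq> i ` t2" using injT t1 t2 tt(2) inj_onD by metis
  have ce: "card e' = 2" using e0(2) e0D(2) injt t1 by (metis card_image inj_on_subset)
  have e'M: "e' \<in> M" using sc_sub[OF scM _ _] it1 t1(2) e0(2) ce unfolding tri_iff
    by (metis card.empty image_mono zero_neq_numeral)
  have sub: "{i ` t1, i ` t2} \<subseteq> {t\<in>triangles_of M. e' \<subseteq> t}" using it1 it2 t1 t2 e0(2) by auto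
  have fin: "finite {t\<in>triangles_of M. e' \<subseteq> t}" using scM unfolding simplicial_complex_def simplices_of_dim_def by auto
  have "card {i ` t1, i ` t2} = 2" using ne by simp
  hence "{i ` t1, i ` t2} = {t\<in>triangles_of M. e' \<subseteq> t}" using card_subset_eq[OF fin sub] M2[OF e'M ce] by simp
  hence "T \<in> {i ` t1, i ` t2}" using T by blast
  thus ?thesis using t1 t2 by blast
qed

lemma facC:
  assumes scD: "simplicial_complex D" and D2: "\<And>e. e \<in> D \<Longrightarrow> card e = 2 \<Longrightarrow> card {t\<in>triangles_of D. e\<subseteq>t} \<le> 2"
    and v: "v \<in> interior_vertices M D i" and uE: "{v,u} \<in> thg_edges M D i"
    and T: "{v,u} \<subseteq> T"
  shows "T \<notin> image i ` triangles_of D"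
proof
  assume "T \<in> image i ` triangles_of D"
  then obtain t where t: "t \<in> triangles_of D" "T = i ` t" by blast
  have "{v,u} \<in> edges_of M" using uE unfolding thg_edges_def by blast
  hence "card {v,u} = 2" unfolding edge_iff by blast
  hence vu: "v \<noteq> u" by auto
  obtain w where w: "w \<in> t" "v = i w" using T t by auto
  obtain a where a: "a \<in> t" "u = i a" using T t by auto
  have aw: "a \<noteq> w" using vu w a by auto
  define e0 where "e0 = {w,a}"
  have tD: "t \<in> D" using t unfolding tri_iff by simp
  have e0D: "e0 \<in> D" unfolding e0_def using sc_sub[OF scD tD, of "{w,a}"] w a by auto
  have ce0: "card e0 = 2" unfolding e0_def using aw by auto
  define S where "S = {t'\<in>triangles_of D. e0 \<subseteq> t'}"
  have finD: "finite D" using scD unfolding simplicial_complex_def by blast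
  have finS: "finite S" unfolding S_def simplices_of_dim_def using finD by simp
  have "t \<in> S" unfolding S_def e0_def using t w a by auto
  hence "card S \<noteq> 0" using finS by auto
  moreover have "card S \<le> 2" unfolding S_def using D2[OF e0D ce0] .
  ultimately consider "card S = 1" | "card S = 2" by linarith
  thus False
  proof cases
    case 1
    hence "e0 \<in> boundary_edges D" unfolding boundary_edges_def S_def edge_iff using e0D ce0 by simp
    hence "i ` e0 \<in> thg_boundary_edges M D i" unfolding thg_boundary_edges_def by blast
    moreover have "v \<in> i ` e0" unfolding e0_def using w by simp
    ultimately show False using v unfolding interior_vertices_def by blast
  next
    case 2
    hence "e0 \<in> interior_edges D" unfolding interior_edges_def S_def edge_iff using e0D ce0 by simp
    moreover have "i ` e0 = {v,u}" unfolding e0_def using w a by simp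
    ultimately have "{v,u} \<in> image i ` interior_edges D" by (metis image_eqI)
    thus False using uE unfolding thg_edges_def by blast
  qed
qed




theorem lemma5p1:
  fixes M :: "'v set set" and D :: "'w set set" and i :: "'w \<Rightarrow> 'v"
  assumes "in_class_T M D i"
    and "uncontractible M D i"
    and "v \<in> interior_vertices M D i"
  shows "degree (thg_edges M D i) v \<ge> 6"
proof -
  note v = assms(3)
  have hd: "torus_hole_data M D i" and tight: "tight36 (thg_vertices M) (thg_edges M D i)"
    using assms(1) unfolding in_class_T_def by auto
  have scM: "simplicial_complex M" and homM: "realization M homeomorphic (sphere (0::complex) 1 \<times> sphere (0::complex) 1)"
    using hd unfolding torus_hole_data_def torus_triangulation_def by auto
  have scD: "simplicial_complex D" and homD: "realization D homeomorphic cball (0::complex) 1"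
    using hd unfolding torus_hole_data_def disc_triangulation_def by auto
  have sm: "simplicial_map i D M" and injt: "\<forall>t\<in>triangles_of D. inj_on i t"
    and injT: "inj_on (image i) (triangles_of D)"
    using hd unfolding torus_hole_data_def by auto
  have LEM: "LE (realization M)" by (rule LE_transfer[OF homM LE_torus])
  have M2: "card {t\<in>triangles_of M. e\<subseteq>t} = 2" if "e \<in> M" "card e = 2" for e
    using edge_le2[OF scM LE_IOD[OF LEM] that] edge_ge2[OF scM LEM that] by simp
  have D2: "card {t\<in>triangles_of D. e\<subseteq>t} \<le> 2" if "e \<in> D" "card e = 2" for e
    using edge_le2[OF scD planar_IOD[OF homD] that] .
  define E where "E = thg_edges M D i"
  define Vx where "Vx = thg_vertices M"
  define Fac where "Fac = facial_cycles M D i"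
  have EM: "e \<in> M" "card e = 2" if "e \<in> E" for e
  proof -
    have "e \<in> edges_of M" using that unfolding E_def thg_edges_def by blast
    thus "e \<in> M" "card e = 2" unfolding edge_iff by blast+
  qed
  have finVx: "finite Vx" unfolding Vx_def thg_vertices_def using sc_finite[OF scM] .
  have EVx: "e \<subseteq> Vx" if "e \<in> E" for e using EM[OF that] unfolding Vx_def thg_vertices_def by auto
  have finE: "finite E"
  proof (rule finite_subset)
    show "E \<subseteq> Pow Vx" using EVx by auto
  qed (use finVx in simp)
  have vVx: "v \<in> Vx" using v unfolding interior_vertices_def Vx_def by blast
  have B: "e \<in> E" if T: "T \<in> Fac" "e \<subseteq> T" "card e = 2" for T e
  proof -
    have TM: "T \<in> triangles_of M" "T \<notin> image i ` triangles_of D" using T unfolding Fac_def facial_cycles_def by auto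
    have ne: "e \<noteq> {}" using T(3) by auto
    have "T \<in> M" using TM(1) unfolding tri_iff by blast
    hence "e \<in> M" using sc_sub[OF scM _ T(2) ne] by blast
    hence "e \<in> edges_of M" using T(3) unfolding edge_iff by simp
    moreover have "e \<notin> image i ` interior_edges D"
    proof
      assume a: "e \<in> image i ` interior_edges D"
      have "T \<in> image i ` triangles_of D" by (rule delA[OF scM M2 sm injt injT a TM(1) T(2)])
      thus False using TM(2) by blast
    qed
    ultimately show ?thesis unfolding E_def thg_edges_def by blast
  qed
  define N where "N = {u. {v,u} \<in> E}"
  have vN: "v \<notin> N"
  proof
    assume "v \<in> N" hence "{v} \<in> E" by (simp add: N_def)
    hence "card {v} = 2" by (rule EM(2))
    thus False by simp
  qed
  have NVx: "N \<subseteq> Vx" unfolding N_def using EVx by auto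
  have finN: "finite N" using finite_subset[OF NVx finVx] .
  have degN: "degree E v = card N"
  proof -
    have "{e\<in>E. v \<in> e} = (\<lambda>u. {v,u}) ` N"
    proof
      show "(\<lambda>u. {v,u}) ` N \<subseteq> {e\<in>E. v \<in> e}" unfolding N_def by auto
      show "{e\<in>E. v \<in> e} \<subseteq> (\<lambda>u. {v,u}) ` N"
      proof
        fix e assume e: "e \<in> {e\<in>E. v \<in> e}"
        have "card e = 2" using e EM(2) by blast
        then obtain a b where ab: "e = {a,b}" "a \<noteq> b" by (meson card_2_iff)
        have "\<exists>u. e = {v,u}" using e ab by auto
        then obtain u where "e = {v,u}" by blast
        thus "e \<in> (\<lambda>u. {v,u}) ` N" using e unfolding N_def by auto
      qed
    qed
    moreover have "inj_on (\<lambda>u. {v,u}) N"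
    proof (rule inj_onI)
      fix x y assume "x \<in> N" "y \<in> N" "{v,x} = {v,y}"
      thus "x = y" using vN by (auto simp: doubleton_eq_iff)
    qed
    ultimately show ?thesis unfolding degree_def by (simp add: card_image)
  qed
  have nb3: "3 \<le> card {x\<in>N. {u,x} \<in> E}" if u: "u \<in> N" for u
  proof -
    have uE: "{v,u} \<in> E" using u unfolding N_def by simp
    have uv: "u \<noteq> v" using u vN by auto
    define TT where "TT = {t\<in>triangles_of M. {v,u}\<subseteq>t}"
    have cTT: "card TT = 2" unfolding TT_def by (rule M2[OF EM[OF uE]])
    then obtain T1 T2 where TT: "TT = {T1,T2}" "T1 \<noteq> T2" by (meson card_2_iff)
    have TF: "T \<in> Fac" if T: "T \<in> TT" for T
    proof -
      have TT': "T \<in> triangles_of M" "{v,u} \<subseteq> T" using T unfolding TT_def by auto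
      have uE': "{v,u} \<in> thg_edges M D i" using uE unfolding E_def .
      have "T \<notin> image i ` triangles_of D" by (rule facC[OF scD D2 v uE' TT'(2)])
      thus ?thesis using TT'(1) unfolding Fac_def facial_cycles_def by blast
    qed
    have FT: "T \<in> TT" if "T \<in> Fac" "{v,u} \<subseteq> T" for T
      using that unfolding TT_def Fac_def facial_cycles_def by blast
    have eqF: "{c\<in>Fac. {v,u} \<subseteq> c} = TT"
    proof
      show "{c\<in>Fac. {v,u} \<subseteq> c} \<subseteq> TT" using FT by blast
      show "TT \<subseteq> {c\<in>Fac. {v,u} \<subseteq> c}" using TF unfolding TT_def by blast
    qed
    have "card {c\<in>Fac. {v,u} \<subseteq> c} = 2" unfolding eqF by (rule cTT)
    hence "FF_edge M D i {v,u}" unfolding FF_edge_def Fac_def[symmetric] E_def[symmetric] using uE by blast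
    then obtain c where c: "three_cycle E c" "{v,u} \<subseteq> c" "c \<notin> Fac"
      using assms(2) unfolding uncontractible_def E_def[symmetric] Fac_def[symmetric] by blast
    have T1in: "T1 \<in> TT" and T2in: "T2 \<in> TT" using TT(1) by auto
    have T1: "card T1 = 3" "v \<in> T1" "u \<in> T1" using T1in unfolding TT_def tri_iff by auto
    have T2: "card T2 = 3" "v \<in> T2" "u \<in> T2" using T2in unfolding TT_def tri_iff by auto
    obtain x1 where x1: "x1 \<notin> {v,u}" "T1 = {v,u,x1}" using tri_third[OF T1 uv[symmetric]] by blast
    obtain x2 where x2: "x2 \<notin> {v,u}" "T2 = {v,u,x2}" using tri_third[OF T2 uv[symmetric]] by blast
    have cc: "card c = 3" using c(1) unfolding three_cycle_def by simp
    have vc: "v \<in> c" "u \<in> c" using c(2) by auto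
    obtain y where y: "y \<notin> {v,u}" "c = {v,u,y}" using tri_third[OF cc vc uv[symmetric]] by blast
    have T1F: "T1 \<in> Fac" and T2F: "T2 \<in> Fac" using TF T1in T2in by auto
    have x12: "x1 \<noteq> x2"
    proof
      assume "x1 = x2" hence "T1 = T2" using x1(2) x2(2) by simp
      thus False using TT(2) by simp
    qed
    have ux1: "u \<noteq> x1" "v \<noteq> x1" using x1(1) by auto
    have ux2: "u \<noteq> x2" "v \<noteq> x2" using x2(1) by auto
    have uy: "u \<noteq> y" "v \<noteq> y" using y(1) by auto
    have "{u,x1} \<in> E" by (rule B[OF T1F]) (use x1(2) ux1 in auto)
    moreover have "{v,x1} \<in> E" by (rule B[OF T1F]) (use x1(2) ux1 in auto)
    ultimately have x1N: "x1 \<in> {x\<in>N. {u,x} \<in> E}" unfolding N_def by simp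
    have "{u,x2} \<in> E" by (rule B[OF T2F]) (use x2(2) ux2 in auto)
    moreover have "{v,x2} \<in> E" by (rule B[OF T2F]) (use x2(2) ux2 in auto)
    ultimately have x2N: "x2 \<in> {x\<in>N. {u,x} \<in> E}" unfolding N_def by simp
    have tc: "\<And>e. e \<subseteq> c \<Longrightarrow> card e = 2 \<Longrightarrow> e \<in> E" using c(1) unfolding three_cycle_def by blast
    have "{u,y} \<in> E" by (rule tc) (use y(2) uy in auto)
    moreover have "{v,y} \<in> E" by (rule tc) (use y(2) uy in auto)
    ultimately have yN: "y \<in> {x\<in>N. {u,x} \<in> E}" unfolding N_def by simp
    have y1: "y \<noteq> x1"
    proof
      assume "y = x1" hence "c = T1" using y(2) x1(2) by simp
      thus False using c(3) T1F by simp
    qed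
    have y2: "y \<noteq> x2"
    proof
      assume "y = x2" hence "c = T2" using y(2) x2(2) by simp
      thus False using c(3) T2F by simp
    qed
    have "card {x1,x2,y} = 3" using x12 y1 y2 by simp
    moreover have "{x1,x2,y} \<subseteq> {x\<in>N. {u,x} \<in> E}" using x1N x2N yN by blast
    moreover have "finite {x\<in>N. {u,x} \<in> E}" using finN by simp
    ultimately show ?thesis using card_mono by metis
  qed
  define EN where "EN = {e\<in>E. e \<subseteq> N}"
  have ENp: "card e = 2 \<and> e \<subseteq> N" if "e \<in> EN" for e using that EM(2) unfolding EN_def by blast
  have hs: "(\<Sum>u\<in>N. card {x\<in>N. {u,x} \<in> EN}) = 2 * card EN"
    by (rule handshake[OF finN ENp])
  have "(\<Sum>u\<in>N. card {x\<in>N. {u,x} \<in> EN}) = (\<Sum>u\<in>N. card {x\<in>N. {u,x} \<in> E})"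
  proof (rule sum.cong[OF refl])
    fix u assume "u \<in> N"
    hence "{x\<in>N. {u,x} \<in> EN} = {x\<in>N. {u,x} \<in> E}" unfolding EN_def by auto
    thus "card {x\<in>N. {u,x} \<in> EN} = card {x\<in>N. {u,x} \<in> E}" by simp
  qed
  moreover have "(\<Sum>u\<in>N. card {x\<in>N. {u,x} \<in> E}) \<ge> (\<Sum>u\<in>N. 3)" by (rule sum_mono) (use nb3 in auto)
  ultimately have hs3: "3 * card N \<le> 2 * card EN" using hs by simp
  show ?thesis
  proof (cases "N = {}")
    case False
    then obtain u where u: "u \<in> N" by blast
    have "{x\<in>N. {u,x} \<in> E} \<subseteq> N - {u}" using EM by fastforce
    hence "card {x\<in>N. {u,x} \<in> E} \<le> card (N - {u})" using finN by (simp add: card_mono)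
    hence N4: "4 \<le> card N" using nb3[OF u] u finN by simp
    define W where "W = insert v N"
    define FF where "FF = {e\<in>E. e \<subseteq> W}"
    have FFeq: "FF = EN \<union> (\<lambda>u. {v,u}) ` N"
    proof
      show "EN \<union> (\<lambda>u. {v,u}) ` N \<subseteq> FF" unfolding FF_def EN_def W_def N_def by auto
      show "FF \<subseteq> EN \<union> (\<lambda>u. {v,u}) ` N"
      proof
        fix e assume e: "e \<in> FF"
        show "e \<in> EN \<union> (\<lambda>u. {v,u}) ` N"
        proof (cases "v \<in> e")
          case True
          have "card e = 2" using e EM(2) unfolding FF_def by blast
          then obtain a b where ab: "e = {a,b}" "a \<noteq> b" by (meson card_2_iff)
          have "\<exists>u. e = {v,u}" using True ab by auto
          then obtain u where "e = {v,u}" by blast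
          thus ?thesis using e unfolding FF_def N_def by auto
        next
          case False thus ?thesis using e unfolding FF_def EN_def W_def by auto
        qed
      qed
    qed
    have disj: "EN \<inter> (\<lambda>u. {v,u}) ` N = {}" unfolding EN_def using vN by auto
    have finEN: "finite EN" unfolding EN_def using finE by simp
    have injv: "inj_on (\<lambda>u. {v,u}) N"
    proof (rule inj_onI)
      fix x y assume "x \<in> N" "y \<in> N" "{v,x} = {v,y}"
      thus "x = y" using vN by (auto simp: doubleton_eq_iff)
    qed
    have cFF: "card FF = card EN + card N"
      unfolding FFeq using card_Un_disjoint[OF finEN finite_imageI[OF finN] disj] card_image[OF injv] by simp
    have cW: "card W = card N + 1" unfolding W_def using vN finN by simp
    have "is_subgraph W FF Vx E" unfolding is_subgraph_def FF_def W_def using vVx NVx by auto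
    moreover have "card W \<ge> 3" using cW N4 by simp
    ultimately have "freedom W FF \<ge> 6" using tight unfolding tight36_def Vx_def E_def by blast
    hence "3 * int (card N + 1) - int (card EN + card N) \<ge> 6" unfolding freedom_def cW cFF .
    hence i1: "6 \<le> 3 * int (card N) + 3 - int (card EN) - int (card N)" by simp
    have i2: "3 * int (card N) \<le> 2 * int (card EN)" using hs3 by linarith
    have "6 \<le> int (card N)" using i1 i2 by linarith
    hence "6 \<le> card N" by simp
    thus ?thesis unfolding E_def[symmetric] degN .
  next
    case True
    obtain u where u: "u \<noteq> v" "{v,u} \<in> M" using vertex_edge[OF scM LEM] vVx unfolding Vx_def thg_vertices_def by blast
    have "card {v,u} = 2" using u by simp
    hence "card {t\<in>triangles_of M. {v,u}\<subseteq>t} = 2" using M2 u by blast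
    then obtain T1 T2 where TT: "{t\<in>triangles_of M. {v,u}\<subseteq>t} = {T1,T2}" "T1 \<noteq> T2" by (meson card_2_iff)
    have T1: "card T1 = 3" "v \<in> T1" "u \<in> T1" "T1 \<in> M" and T2: "card T2 = 3" "v \<in> T2" "u \<in> T2" "T2 \<in> M"
      using TT(1) unfolding tri_iff by blast+
    obtain x1 where x1: "x1 \<notin> {v,u}" "T1 = {v,u,x1}" using tri_third[OF T1(1-3) u(1)[symmetric]] by blast
    obtain x2 where x2: "x2 \<notin> {v,u}" "T2 = {v,u,x2}" using tri_third[OF T2(1-3) u(1)[symmetric]] by blast
    have "x1 \<noteq> x2" using TT(2) x1 x2 by auto
    hence "card {v,u,x1,x2} = 4" using x1 x2 u by auto
    moreover have "{v,u,x1,x2} \<subseteq> Vx" using T1 T2 x1 x2 unfolding Vx_def thg_vertices_def by auto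
    ultimately have "4 \<le> card Vx" using finVx by (metis card_mono)
    hence cW: "3 \<le> card (Vx - {v})" using vVx finVx by simp
    have nv: "v \<notin> e" if e: "e \<in> E" for e
    proof
      assume ve: "v \<in> e"
      obtain a b where ab: "e = {a,b}" "a \<noteq> b" using EM(2)[OF e] by (meson card_2_iff)
      have "\<exists>u'. e = {v,u'}" using ve ab by auto
      then obtain u' where "e = {v,u'}" by blast
      hence "u' \<in> N" using e unfolding N_def by simp
      thus False using True by simp
    qed
    have "is_subgraph (Vx - {v}) E Vx E"
      unfolding is_subgraph_def using EVx nv by blast
    hence "freedom (Vx - {v}) E \<ge> 6" using tight cW unfolding tight36_def Vx_def E_def by blast
    moreover have "freedom Vx E = 6" using tight unfolding tight36_def Vx_def E_def by blast
    ultimately show ?thesis unfolding freedom_def using vVx finVx by (simp add: card_Diff_singleton)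
  qed
qed


end
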